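(* Consider a single advertising slot sold by the following hybrid auction. Each advertiser $j$ submits a bid pair $(m_j,c_j)$ (per-impression bid and per-click bid). The auctioneer computes for each advertiser an index $q_j>0$ independent of the bids; the effective bid is $R_j=\max(m_j,c_jq_j)$. The advertiser with the highest effective bid wins; letting $R_{-j^*}$ be the highest competing effective bid, the winner $j^*$ pays $R_{-j^*}$ per impression if $m_{j^*}>c_{j^*}q_{j^*}$, and otherwise pays $R_{-j^*}/q_{j^*}$ per click. The corresponding auction that ignores per-impression bids uses effective bids $c_jq_j$, awards the slot to the highest one, and charges the winner the second highest value of $c_jq_j$ divided by its own $q$ per click. Suppose each advertiser $j$ has per-click value $v_j$ and knows its click-through probability $p_j$ exactly, and bids truthfully $(m_j,c_j)=(v_jp_j,v_j)$. The auctioneer has a prior $\mathcal{Q}_j=\mathrm{Beta}(\alpha_j,\beta_j)$ with $\alpha_j,\beta_j\ge 1$ on the click-through probability of advertiser $j$, each $p_j$ is drawn from $\mathcal{Q}_j$, and $q_j$ is the Gittins index of $\mathcal{Q}_j$ for an arbitrary discount factor $\gamma_a\in[0,1)$. Then the expected revenue of the auctioneer at the current step under the hybrid auction is at least $1-1/e$ times the expected revenue of the corresponding auction that ignores the per-impression bids.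
   Context: $\mathrm{Beta}(\alpha,\beta)$ denotes the distribution on $[0,1]$ with density proportional to $x^{\alpha-1}(1-x)^{\beta-1}$. Gittins index: for a coin whose probability of heads has prior distribution $\mathcal{Q}$ (updated by Bayes' rule after each toss), which yields reward $1$ on heads and is charged an amount $G$ for every toss, and which may be retired at any time, the Gittins index of $\mathcal{Q}$ with discount factor $\gamma_a$ is the largest $G$ for which the optimal expected discounted (rewards at step $t$ multiplied by $\gamma_a^t$) difference between rewards and charges is non-negative. It is at least the mean of $\mathcal{Q}$ and equals the mean when $\gamma_a=0$. *)

theory Defs
  imports "HOL-Probability.Probability"
begin

definition beta_density :: "real \<Rightarrow> real \<Rightarrow> real \<Rightarrow> real" where
  "beta_density a b x =
     (if 0 < x \<and> x < 1 then x powr (a - 1) * (1 - x) powr (b - 1) / Beta a b else 0)"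

definition beta_measure :: "real \<Rightarrow> real \<Rightarrow> real measure" where
  "beta_measure a b = density lborel (\<lambda>x. ennreal (beta_density a b x))"

text \<open>A prior Beta(a,b) has mean a/(a+b); after heads it becomes Beta(a+1,b),
  after tails Beta(a,b+1).  The value with charge G per toss, discount g, and the
  option to retire is the limit of finite-horizon values (Bellman iteration).\<close>

definition beta_mean :: "real \<Rightarrow> real \<Rightarrow> real" where
  "beta_mean a b = a / (a + b)"

primrec retire_value :: "nat \<Rightarrow> real \<Rightarrow> real \<Rightarrow> real \<Rightarrow> real \<Rightarrow> real" where
  "retire_value 0 g G a b = 0"
| "retire_value (Suc k) g G a b =
     max 0 (beta_mean a b - G
            + g * (beta_mean a b * retire_value k g G (a + 1) b
                   + (1 - beta_mean a b) * retire_value k g G a (b + 1)))"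

definition opt_retire_value :: "real \<Rightarrow> real \<Rightarrow> real \<Rightarrow> real \<Rightarrow> real" where
  "opt_retire_value g G a b = (SUP k. retire_value k g G a b)"

text \<open>Optimal value when the coin must be tossed at the current step (step 0)
  and may be retired at any later time.\<close>
definition play_value :: "real \<Rightarrow> real \<Rightarrow> real \<Rightarrow> real \<Rightarrow> real" where
  "play_value g G a b =
     beta_mean a b - G
     + g * (beta_mean a b * opt_retire_value g G (a + 1) b
            + (1 - beta_mean a b) * opt_retire_value g G a (b + 1))"

definition gittins_index :: "real \<Rightarrow> real \<Rightarrow> real \<Rightarrow> real" where
  "gittins_index g a b = Sup {G. play_value g G a b \<ge> 0}"

text \<open>Advertisers are 0..n-1.  The winner is the advertiser with the highest effective
  bid; ties are broken in favour of the smallest index.\<close>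

definition auction_winner :: "nat \<Rightarrow> (nat \<Rightarrow> real) \<Rightarrow> nat" where
  "auction_winner n R = (LEAST j. j < n \<and> (\<forall>i<n. R i \<le> R j))"

text \<open>Highest competing effective bid (0 if there is no competitor).\<close>
definition competing_bid :: "nat \<Rightarrow> (nat \<Rightarrow> real) \<Rightarrow> nat \<Rightarrow> real" where
  "competing_bid n R w = Max (insert 0 {R i | i. i < n \<and> i \<noteq> w})"

text \<open>Expected revenue (over the click) of the hybrid auction with bids (m j, c j)
  and indices q j, when the true click probabilities are p j.\<close>
definition hybrid_revenue ::
  "nat \<Rightarrow> (nat \<Rightarrow> real) \<Rightarrow> (nat \<Rightarrow> real) \<Rightarrow> (nat \<Rightarrow> real) \<Rightarrow> (nat \<Rightarrow> real) \<Rightarrow> real" where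
  "hybrid_revenue n m c q p =
     (let R = (\<lambda>j. max (m j) (c j * q j));
          w = auction_winner n R;
          C = competing_bid n R w
      in if m w > c w * q w then C else (C / q w) * p w)"

text \<open>Expected revenue (over the click) of the pay-per-click auction ignoring m.\<close>
definition ppc_revenue ::
  "nat \<Rightarrow> (nat \<Rightarrow> real) \<Rightarrow> (nat \<Rightarrow> real) \<Rightarrow> (nat \<Rightarrow> real) \<Rightarrow> real" where
  "ppc_revenue n c q p =
     (let S = (\<lambda>j. c j * q j);
          w = auction_winner n S
      in (competing_bid n S w / q w) * p w)"

end

theory Submission
  imports Defs
begin

definition bf :: "real \<Rightarrow> real \<Rightarrow> real \<Rightarrow> real" where
  "bf a b x = x powr (a - 1) * (1 - x) powr (b - 1)"

lemma Beta_pos: "0 < a \<Longrightarrow> 0 < b \<Longrightarrow> 0 < Beta a (b::real)"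
  by (simp add: Beta_def Gamma_real_pos)

lemma bf_nonneg: "0 \<le> bf a b x"
  by (simp add: bf_def)

lemma beta_density_eq: "beta_density a b x = indicator {0..1} x * (bf a b x / Beta a b)"
  by (auto simp: beta_density_def bf_def indicator_def)

lemma bf_has_integral: "0 < a \<Longrightarrow> 0 < b \<Longrightarrow> (bf a b has_integral Beta a b) {0..1}"
  unfolding bf_def[abs_def] by (rule has_integral_Beta_real)

lemma beta_transfer:
  assumes a: "0 < a" and b: "0 < b" and hm[measurable]: "h \<in> borel_measurable borel"
    and nn: "\<And>x. x \<in> {0..1} \<Longrightarrow> 0 \<le> h x"
    and I: "((\<lambda>x. h x * bf a b x) has_integral I) {0..1}"
  shows "has_bochner_integral (beta_measure a b) h (I / Beta a b)"
proof -
  have [measurable]: "bf a b \<in> borel_measurable borel" unfolding bf_def[abs_def] by measurable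
  have nnI: "\<And>x. x \<in> {0..1} \<Longrightarrow> 0 \<le> h x * bf a b x" using nn by (simp add: bf_nonneg)
  have 1: "integral\<^sup>N lborel (\<lambda>x. indicator {0..1} x * (h x * bf a b x)) = I"
    by (rule nn_integral_has_integral_lebesgue[OF nnI I])
  have I0: "0 \<le> I" using has_integral_nonneg[OF I nnI] .
  have 2: "has_bochner_integral lborel (\<lambda>x. indicator {0..1} x * (h x * bf a b x)) I"
    apply (rule has_bochner_integral_nn_integral)
    using 1 I0 nnI by (auto simp: indicator_def)
  have 3: "has_bochner_integral lborel (\<lambda>x. indicator {0..1} x * (h x * bf a b x) / Beta a b) (I / Beta a b)"
    using 2 by (rule has_bochner_integral_divide_zero)
  have 4: "has_bochner_integral lborel (\<lambda>x. beta_density a b x *\<^sub>R h x) (I / Beta a b)"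
    apply (rule has_bochner_integral_cong[THEN iffD2, OF refl _ refl 3])
    using a b Beta_pos[OF a b] by (auto simp: beta_density_eq indicator_def bf_nonneg 3)
  show ?thesis unfolding beta_measure_def
    apply (rule has_bochner_integral_density[OF _ _ _ 4])
    using a b Beta_pos[OF a b] by (auto simp: beta_density_eq bf_nonneg)
qed

lemma beta_density_meas[measurable]: "beta_density a b \<in> borel_measurable borel"
  unfolding beta_density_eq[abs_def] bf_def by measurable

lemma beta_prob: assumes a: "0 < a" and b: "0 < b" shows "prob_space (beta_measure a b)"
proof -
  have sp: "space (beta_measure a b) = UNIV" by (simp add: beta_measure_def)
  have "emeasure (beta_measure a b) UNIV = (\<integral>\<^sup>+ x. ennreal (beta_density a b x) \<partial>lborel)"
    unfolding beta_measure_def by (subst emeasure_density) auto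
  also have "\<dots> = (\<integral>\<^sup>+ x. ennreal (bf a b x / Beta a b) * indicator {0..1} x \<partial>lborel)"
    by (intro nn_integral_cong) (auto simp: beta_density_eq indicator_def)
  also have "\<dots> = ennreal (Beta a b / Beta a b)"
    by (rule nn_integral_has_integral_lebesgue')
       (use a b Beta_pos[OF a b] has_integral_divide[OF bf_has_integral[OF a b], of "Beta a b"] in \<open>auto simp: bf_nonneg\<close>)
  also have "\<dots> = 1" using Beta_pos[OF a b] by simp
  finally show ?thesis by (intro prob_spaceI) (simp add: sp)
qed

definition gg :: "real \<Rightarrow> real \<Rightarrow> real \<Rightarrow> real" where
  "gg a b x = x powr a * (1 - x) powr b"

lemma beta_mean_int:
  assumes a: "0 < a" and b: "0 < b"
  shows "has_bochner_integral (beta_measure a b) (\<lambda>x. x) (a / (a + b))"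
proof -
  have "((\<lambda>x. x * bf a b x) has_integral Beta (a+1) b) {0..1}"
  proof -
    have "(bf (a+1) b has_integral Beta (a+1) b) {0..1}" using a b by (intro bf_has_integral) auto
    moreover have "bf (a+1) b x = x * bf a b x" if "x \<in> {0..1}" for x
    proof (cases "x = 0")
      case False
      with that have "x powr a = x * x powr (a - 1)"
        using powr_mult_base[of x "a - 1"] by simp
      thus ?thesis by (simp add: bf_def)
    qed (simp add: bf_def)
    ultimately show ?thesis by (rule has_integral_eq[rotated]) auto
  qed
  hence "has_bochner_integral (beta_measure a b) (\<lambda>x. x) (Beta (a+1) b / Beta a b)"
    by (intro beta_transfer a b) auto
  moreover have "Beta (a+1) b / Beta a b = a / (a + b)"
    using Beta_plus1_left[of a b] a b Beta_pos[OF a b]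
    by (auto simp: field_simps nonpos_Ints_def)
  ultimately show ?thesis by simp
qed

lemma gg_deriv:
  assumes "0 < x" "x < 1" "0 < a" "0 < b"
  shows "(gg a b has_real_derivative (a + b) * (a / (a + b) - x) * bf a b x) (at x)"
proof -
  have "(gg a b has_real_derivative (a * x powr (a - 1) * (1 - x) powr b + x powr a * (b * (1 - x) powr (b - 1) * (-1)))) (at x)"
    unfolding gg_def[abs_def] using assms by (auto intro!: derivative_eq_intros)
  moreover have e1: "x powr a = x * x powr (a - 1)" and e2: "(1 - x) powr b = (1 - x) * (1 - x) powr (b - 1)"
    using assms by (simp_all add: powr_mult_base)
  moreover have e3: "(a + b) * (a / (a + b) - x) = a - (a + b) * x" using assms by (simp add: field_simps)
  ultimately show ?thesis
    apply (elim DERIV_cong) unfolding e1 e2 e3 bf_def by (simp add: algebra_simps)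
qed

lemma gg_cont: assumes "0 < a" "0 < b" shows "continuous_on {0..1} (gg a b)"
  unfolding gg_def[abs_def]
  by (intro continuous_intros continuous_on_powr') (use assms in auto)

lemma excess_int:
  assumes a: "0 < a" and b: "0 < b"
  defines "\<mu> \<equiv> a / (a + b)"
  shows "((\<lambda>x. max 0 (x - \<mu>) * bf a b x) has_integral gg a b \<mu> / (a + b)) {0..1}"
proof -
  have mu: "0 < \<mu>" "\<mu> < 1" using a b by (auto simp: \<mu>_def field_simps)
  have "((\<lambda>x. (x - \<mu>) * bf a b x) has_integral ((\<lambda>x. - gg a b x / (a + b)) 1 - (\<lambda>x. - gg a b x / (a + b)) \<mu>)) {\<mu>..1}"
  proof (rule fundamental_theorem_of_calculus_interior)
    show "continuous_on {\<mu>..1} (\<lambda>x. - gg a b x / (a + b))"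
      using gg_cont[OF a b] mu a b by (intro continuous_intros) (auto elim: continuous_on_subset)
    fix x assume x: "x \<in> {\<mu><..<1}"
    have "((\<lambda>x. - gg a b x / (a + b)) has_real_derivative - ((a + b) * (a / (a + b) - x) * bf a b x) / (a + b)) (at x)"
      using DERIV_cdivide[OF DERIV_minus[OF gg_deriv], of x a b "a + b"] x mu a b by auto
    moreover have "- ((a + b) * (a / (a + b) - x) * bf a b x) / (a + b) = (x - \<mu>) * bf a b x"
    proof -
      have "a / (a + b) = \<mu>" by (simp add: \<mu>_def)
      moreover have "a + b \<noteq> 0" using a b by simp
      moreover have "\<And>c y F. (c::real) \<noteq> 0 \<Longrightarrow> - (c * y * F) / c = - (y * F)" by simp
      ultimately have "- ((a + b) * (a / (a + b) - x) * bf a b x) / (a + b) = - ((a / (a + b) - x) * bf a b x)"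
        by blast
      thus ?thesis using \<open>a / (a + b) = \<mu>\<close> by (simp add: algebra_simps)
    qed
    ultimately show "((\<lambda>x. - gg a b x / (a + b)) has_vector_derivative (x - \<mu>) * bf a b x) (at x)"
      by (simp add: has_real_derivative_iff_has_vector_derivative)
  qed (use mu in auto)
  moreover have "gg a b 1 = 0" by (simp add: gg_def)
  ultimately have "((\<lambda>x. (x - \<mu>) * bf a b x) has_integral gg a b \<mu> / (a + b)) {\<mu>..1}" by simp
  hence 2: "((\<lambda>x. max 0 (x - \<mu>) * bf a b x) has_integral gg a b \<mu> / (a + b)) {\<mu>..1}"
    by (rule has_integral_eq[rotated]) auto
  have 1: "((\<lambda>x. max 0 (x - \<mu>) * bf a b x) has_integral 0) {0..\<mu>}"
    by (rule has_integral_eq[rotated, OF has_integral_0]) auto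
  show ?thesis using has_integral_combine[OF _ _ 1 2] mu by simp
qed

lemma bf_integrable: "0 < a \<Longrightarrow> 0 < b \<Longrightarrow> bf a b integrable_on {0..1}"
  using bf_has_integral by blast

lemma tail_lower:
  assumes a: "1 \<le> a" and b: "0 < b" and t: "0 \<le> t" "t \<le> 1"
  shows "t powr (a - 1) * (1 - t) powr b / b \<le> integral {t..1} (bf a b)"
proof -
  have "((\<lambda>x. t powr (a - 1) * (1 - x) powr (b - 1)) has_integral
        ((\<lambda>x. - (t powr (a - 1) * (1 - x) powr b / b)) 1 - (\<lambda>x. - (t powr (a - 1) * (1 - x) powr b / b)) t)) {t..1}"
  proof (rule fundamental_theorem_of_calculus_interior)
    show "continuous_on {t..1} (\<lambda>x. - (t powr (a - 1) * (1 - x) powr b / b))"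
      using b by (intro continuous_intros continuous_on_powr') auto
    fix x assume x: "x \<in> {t<..<1}"
    have "((\<lambda>x. - (t powr (a - 1) * (1 - x) powr b / b)) has_real_derivative
           - (t powr (a - 1) * (b * (1 - x) powr (b - 1) * (- 1)) / b)) (at x)"
      using x by (auto intro!: derivative_eq_intros)
    thus "((\<lambda>x. - (t powr (a - 1) * (1 - x) powr b / b)) has_vector_derivative t powr (a - 1) * (1 - x) powr (b - 1)) (at x)"
      using b by (simp add: has_real_derivative_iff_has_vector_derivative)
  qed (use t in auto)
  hence 1: "((\<lambda>x. t powr (a - 1) * (1 - x) powr (b - 1)) has_integral t powr (a - 1) * (1 - t) powr b / b) {t..1}"
    by simp
  have 2: "(bf a b has_integral integral {t..1} (bf a b)) {t..1}"
    using integrable_on_subinterval[OF bf_integrable[of a b], of t 1] a b t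
    by (auto intro: integrable_integral)
  show ?thesis
  proof (rule has_integral_le[OF 1 2])
    fix x assume x: "x \<in> {t..1}"
    have "t powr (a - 1) \<le> x powr (a - 1)" using x t a by (intro powr_mono2) auto
    thus "t powr (a - 1) * (1 - x) powr (b - 1) \<le> bf a b x"
      unfolding bf_def by (intro mult_right_mono) auto
  qed
qed

lemma key_ineq:
  assumes a: "1 \<le> a" and b: "1 \<le> b"
  defines "\<mu> \<equiv> a / (a + b)"
  shows "exp 1 * (gg a b \<mu> / (a + b)) \<le> \<mu> * Beta a b"
proof -
  have a0: "0 < a" and b0: "0 < b" using a b by auto
  have mu: "0 < \<mu>" "\<mu> < 1" using a0 b0 by (auto simp: \<mu>_def field_simps)
  define B where "B = Beta a b"
  define J where "J = (\<lambda>t. integral {0..t} (bf a b))"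
  define H where "H = (\<lambda>t. exp (t / \<mu>) * (gg a b t / (a + b) + (\<mu> - t) * (B - J t)))"
  have tail: "integral {t..1} (bf a b) = B - J t" if "0 \<le> t" "t \<le> 1" for t
    using Henstock_Kurzweil_Integration.integral_combine[OF that bf_integrable[OF a0 b0]] bf_has_integral[OF a0 b0]
    by (auto simp: J_def B_def integral_unique)
  have contJ: "continuous_on {0..1} J"
    unfolding J_def by (rule indefinite_integral_continuous_1[OF bf_integrable[OF a0 b0]])
  have "H \<mu> \<le> H 0"
  proof (rule DERIV_nonpos_imp_decreasing_open[of 0 \<mu> H])
    show "0 \<le> \<mu>" using mu by simp
    show "continuous_on {0..\<mu>} H"
      unfolding H_def using mu a0 b0
      by (intro continuous_intros continuous_on_subset[OF gg_cont[OF a0 b0]] continuous_on_subset[OF contJ]) auto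
  next
    fix t assume t: "0 < t" "t < \<mu>"
    have t1: "t < 1" using t mu by simp
    have cbf: "isCont (bf a b) t" unfolding bf_def[abs_def] using t t1
      by (intro continuous_intros) auto
    have "(J has_vector_derivative bf a b t) (at t within {0..1})"
      unfolding J_def
      using integral_has_vector_derivative_continuous_at[OF bf_integrable[OF a0 b0], of t "{}"] t t1 cbf
      by (auto simp: continuous_at_imp_continuous_within)
    hence dJ: "(J has_real_derivative bf a b t) (at t)"
      using t t1 by (simp add: at_within_Icc_at has_real_derivative_iff_has_vector_derivative)
    have dg: "(gg a b has_real_derivative (a + b) * (\<mu> - t) * bf a b t) (at t)"
      using gg_deriv[OF t(1) t1 a0 b0] by (simp add: \<mu>_def)
    have dH: "(H has_real_derivative exp (t / \<mu>) * ((gg a b t / (a + b) + (\<mu> - t) * (B - J t)) / \<mu> - (B - J t))) (at t)"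
    proof -
      have d1: "((\<lambda>t. exp (t / \<mu>)) has_real_derivative exp (t / \<mu>) * (1 / \<mu>)) (at t)"
        using mu by (auto intro!: derivative_eq_intros)
      have d2: "((\<lambda>t. (\<mu> - t) * (B - J t)) has_real_derivative (\<mu> - t) * (- bf a b t) + (0 - 1) * (B - J t)) (at t)"
        using DERIV_mult'[OF DERIV_diff[OF DERIV_const DERIV_ident] DERIV_diff[OF DERIV_const dJ]] by simp
      have d3: "((\<lambda>t. gg a b t / (a + b) + (\<mu> - t) * (B - J t)) has_real_derivative
                 (a + b) * (\<mu> - t) * bf a b t / (a + b) + ((\<mu> - t) * (- bf a b t) + (0 - 1) * (B - J t))) (at t)"
        by (intro DERIV_add DERIV_cdivide dg d2)
      have e: "(a + b) * (\<mu> - t) * bf a b t / (a + b) + ((\<mu> - t) * (- bf a b t) + (0 - 1) * (B - J t)) = - (B - J t)"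
        using a0 b0 by simp
      note d4 = DERIV_mult'[OF d1 d3[unfolded e]]
      show ?thesis unfolding H_def
        by (rule DERIV_cong[OF d4]) (use mu a0 b0 in \<open>simp add: field_simps\<close>)
    qed
    have "t powr (a - 1) * (1 - t) powr b / b \<le> B - J t"
      using tail_lower[OF a b0, of t] tail[of t] t t1 by simp
    hence "t * (t powr (a - 1) * (1 - t) powr b / b) \<le> t * (B - J t)"
      using t by (intro mult_left_mono) auto
    moreover have "t * (t powr (a - 1) * (1 - t) powr b / b) = gg a b t / b"
      using powr_mult_base[of t "a - 1"] t by (simp add: gg_def)
    moreover have "gg a b t / (a + b) \<le> gg a b t / b"
      using a0 b0 by (intro divide_left_mono) (auto simp: gg_def)
    ultimately have "gg a b t / (a + b) \<le> t * (B - J t)" by linarith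
    hence "(gg a b t / (a + b) + (\<mu> - t) * (B - J t)) / \<mu> - (B - J t) \<le> 0"
      using mu by (simp add: field_simps)
    hence "exp (t / \<mu>) * ((gg a b t / (a + b) + (\<mu> - t) * (B - J t)) / \<mu> - (B - J t)) \<le> 0"
      by (simp add: mult_nonneg_nonpos)
    thus "\<exists>y. (H has_real_derivative y) (at t) \<and> y \<le> 0" using dH by blast
  qed
  moreover have "H 0 = \<mu> * B" by (simp add: H_def J_def gg_def)
  moreover have "H \<mu> = exp 1 * (gg a b \<mu> / (a + b))" using mu by (simp add: H_def)
  ultimately show ?thesis by (simp add: B_def)
qed

lemma beta_min_bound:
  assumes a: "1 \<le> a" and b: "1 \<le> b" and q: "a / (a + b) \<le> q"
  shows "integrable (beta_measure a b) (\<lambda>x. min x q)"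
    and "(1 - exp (-1)) * (a / (a + b)) \<le> (LINT x|beta_measure a b. min x q)"
proof -
  have a0: "0 < a" and b0: "0 < b" using a b by auto
  define \<mu> where "\<mu> = a / (a + b)"
  interpret P: prob_space "beta_measure a b" by (rule beta_prob[OF a0 b0])
  have sp: "space (beta_measure a b) = UNIV" by (simp add: beta_measure_def)
  have m[measurable]: "sets (beta_measure a b) = sets borel" by (simp add: beta_measure_def)
  have X: "has_bochner_integral (beta_measure a b) (\<lambda>x. x) \<mu>"
    using beta_mean_int[OF a0 b0] by (simp add: \<mu>_def)
  have E: "has_bochner_integral (beta_measure a b) (\<lambda>x. max 0 (x - \<mu>)) (gg a b \<mu> / (a + b) / Beta a b)"
    by (rule beta_transfer[OF a0 b0]) (use excess_int[OF a0 b0] in \<open>auto simp: \<mu>_def\<close>)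
  have iX: "integrable (beta_measure a b) (\<lambda>x. x)" using X by (auto simp: has_bochner_integral_iff)
  show iM: "integrable (beta_measure a b) (\<lambda>x. min x q)"
  proof (rule Bochner_Integration.integrable_bound[of _ "\<lambda>x. \<bar>x\<bar> + \<bar>q\<bar>"])
    show "integrable (beta_measure a b) (\<lambda>x. \<bar>x\<bar> + \<bar>q\<bar>)"
      using iX by (intro Bochner_Integration.integrable_add P.integrable_const) auto
    show "(\<lambda>x. min x q) \<in> borel_measurable (beta_measure a b)"
      by (subst measurable_cong_sets[OF m refl]) measurable
    show "AE x in beta_measure a b. norm (min x q) \<le> norm (\<bar>x\<bar> + \<bar>q\<bar>)" by (auto intro!: AE_I2)
  qed
  have "LINT x|beta_measure a b. (x - max 0 (x - \<mu>)) \<le> LINT x|beta_measure a b. min x q"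
    apply (rule integral_mono)
    using iX E iM q by (auto simp: has_bochner_integral_iff \<mu>_def)
  moreover have "(LINT x|beta_measure a b. (x - max 0 (x - \<mu>))) = \<mu> - gg a b \<mu> / (a + b) / Beta a b"
    using X E by (auto simp: has_bochner_integral_iff)
  moreover have "exp 1 * (gg a b \<mu> / (a + b)) \<le> \<mu> * Beta a b"
    using key_ineq[OF a b] by (simp add: \<mu>_def)
  hence "gg a b \<mu> / (a + b) / Beta a b \<le> \<mu> * exp (-1)"
  proof -
    define X where "X = gg a b \<mu> / (a + b)"
    have "exp (-1) * (exp 1 * X) \<le> exp (-1) * (\<mu> * Beta a b)"
      using \<open>exp 1 * (gg a b \<mu> / (a + b)) \<le> \<mu> * Beta a b\<close> by (intro mult_left_mono) (auto simp: X_def)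
    hence "X \<le> \<mu> * exp (-1) * Beta a b" by (simp add: exp_minus field_simps)
    hence "X / Beta a b \<le> \<mu> * exp (-1)" using Beta_pos[OF a0 b0] by (simp add: pos_divide_le_eq)
    thus ?thesis by (simp add: X_def)
  qed
  moreover have "(1 - exp (-1)) * \<mu> = \<mu> - \<mu> * exp (-1)" by (simp add: algebra_simps)
  ultimately have "(1 - exp (-1)) * \<mu> \<le> (LINT x|beta_measure a b. min x q)" by linarith
  thus "(1 - exp (-1)) * (a / (a + b)) \<le> (LINT x|beta_measure a b. min x q)" by (simp add: \<mu>_def)
qed

lemma beta_mean_bounds: "0 < a \<Longrightarrow> 0 < b \<Longrightarrow> 0 < beta_mean a b \<and> beta_mean a b < 1"
  by (simp add: beta_mean_def field_simps)

lemma rv_zero: "1 \<le> G \<Longrightarrow> 0 < a \<Longrightarrow> 0 < b \<Longrightarrow> retire_value k g G a b = 0"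
proof (induction k arbitrary: a b)
  case (Suc k)
  have "beta_mean a b < 1" using beta_mean_bounds[OF Suc.prems(2,3)] by simp
  thus ?case using Suc by simp
qed simp

lemma rv_bound:
  assumes "0 \<le> G" "0 \<le> g" "g < 1"
  shows "0 < a \<Longrightarrow> 0 < b \<Longrightarrow> 0 \<le> retire_value k g G a b \<and> retire_value k g G a b \<le> 1 / (1 - g)"
proof (induction k arbitrary: a b)
  case 0 thus ?case using assms by simp
next
  case (Suc k)
  define m where "m = beta_mean a b"
  have m: "0 < m" "m < 1" using beta_mean_bounds[OF Suc.prems] by (auto simp: m_def)
  define X where "X = retire_value k g G (a + 1) b"
  define Y where "Y = retire_value k g G a (b + 1)"
  have X: "0 \<le> X" "X \<le> 1 / (1 - g)" using Suc.IH[of "a+1" b] Suc.prems by (auto simp: X_def)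
  have Y: "0 \<le> Y" "Y \<le> 1 / (1 - g)" using Suc.IH[of a "b+1"] Suc.prems by (auto simp: Y_def)
  have "m * X + (1 - m) * Y \<le> m * (1 / (1 - g)) + (1 - m) * (1 / (1 - g))"
    using m X Y by (intro add_mono mult_left_mono) auto
  moreover have "m * (1 / (1 - g)) + (1 - m) * (1 / (1 - g)) = 1 / (1 - g)" by (simp add: add_divide_distrib[symmetric])
  ultimately have "m * X + (1 - m) * Y \<le> 1 / (1 - g)" by linarith
  hence "g * (m * X + (1 - m) * Y) \<le> g * (1 / (1 - g))"
    using assms by (intro mult_left_mono) auto
  moreover have "g * (1 / (1 - g)) = 1 / (1 - g) - 1" using assms by (simp add: field_simps)
  ultimately have "m - G + g * (m * X + (1 - m) * Y) \<le> 1 / (1 - g)"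
    using m assms by linarith
  thus ?case using assms by (simp add: m_def[symmetric] X_def[symmetric] Y_def[symmetric])
qed

lemma opt_nonneg:
  assumes "0 \<le> G" "0 \<le> g" "g < 1" "0 < a" "0 < b"
  shows "0 \<le> opt_retire_value g G a b"
proof -
  have B: "bdd_above (range (\<lambda>k. retire_value k g G a b))"
    using rv_bound[OF assms(1-3) assms(4,5)] by (intro bdd_aboveI2) blast
  have "retire_value 0 g G a b \<le> opt_retire_value g G a b"
    unfolding opt_retire_value_def by (rule cSUP_upper[OF UNIV_I B])
  thus ?thesis by simp
qed

lemma gittins_ge_mean:
  assumes "0 \<le> g" "g < 1" "0 < a" "0 < b"
  shows "beta_mean a b \<le> gittins_index g a b"
proof -
  define m where "m = beta_mean a b"
  have m: "0 < m" "m < 1" using beta_mean_bounds[OF assms(3,4)] by (auto simp: m_def)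
  have "play_value g m a b \<ge> 0"
    unfolding play_value_def m_def[symmetric]
    using opt_nonneg[of m g "a+1" b] opt_nonneg[of m g a "b+1"] m assms
    by (intro add_nonneg_nonneg mult_nonneg_nonneg) auto
  moreover have "bdd_above {G. play_value g G a b \<ge> 0}"
  proof (rule bdd_aboveI)
    fix G assume G: "G \<in> {G. play_value g G a b \<ge> 0}"
    show "G \<le> 1"
    proof (rule ccontr)
      assume "\<not> G \<le> 1"
      hence "opt_retire_value g G c d = 0" if "0 < c" "0 < d" for c d
        using rv_zero[of G c d] that by (simp add: opt_retire_value_def)
      hence "play_value g G a b = beta_mean a b - G" using assms by (simp add: play_value_def)
      with G m \<open>\<not> G \<le> 1\<close> show False by (simp add: m_def)
    qed
  qed
  ultimately show ?thesis unfolding gittins_index_def m_def by (intro cSup_upper) auto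
qed

lemma winner_props:
  assumes "0 < n"
  shows "auction_winner n R < n" "\<And>i. i < n \<Longrightarrow> R i \<le> R (auction_winner n R)"
    "\<And>j. j < auction_winner n R \<Longrightarrow> R j < R (auction_winner n R)"
proof -
  define P where "P = (\<lambda>j. j < n \<and> (\<forall>i<n. R i \<le> R j))"
  have "\<exists>j. P j"
  proof -
    have fin: "finite (R ` {..<n})" and ne: "R ` {..<n} \<noteq> {}" using assms by auto
    obtain j where j: "j < n" "R j = Max (R ` {..<n})" using Max_in[OF fin ne] by auto
    have "\<forall>i<n. R i \<le> R j" using j fin by auto
    thus ?thesis using j by (auto simp: P_def)
  qed
  hence w: "P (auction_winner n R)" unfolding auction_winner_def P_def[symmetric] by (rule LeastI_ex)
  thus "auction_winner n R < n" "\<And>i. i < n \<Longrightarrow> R i \<le> R (auction_winner n R)" by (auto simp: P_def)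
  fix j assume j: "j < auction_winner n R"
  hence "\<not> P j" unfolding auction_winner_def P_def[symmetric] by (rule not_less_Least)
  moreover have "j < n" using j w by (auto simp: P_def)
  ultimately obtain i where "i < n" "R j < R i" by (auto simp: P_def not_le)
  thus "R j < R (auction_winner n R)" using w by (auto simp: P_def)
qed

lemma cb_set: "{R i |i. i < n \<and> i \<noteq> w} = R ` {i. i < n \<and> i \<noteq> w}" by auto

lemma cb_ge: "i < n \<Longrightarrow> i \<noteq> w \<Longrightarrow> R i \<le> competing_bid n R w"
  unfolding competing_bid_def cb_set by (rule Max_ge) auto

lemma cb_nonneg: "0 \<le> competing_bid n R w"
  unfolding competing_bid_def cb_set by (rule Max_ge) auto

lemma cb_le: "(\<And>i. i < n \<Longrightarrow> i \<noteq> w \<Longrightarrow> R i \<le> X) \<Longrightarrow> 0 \<le> X \<Longrightarrow> competing_bid n R w \<le> X"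
  unfolding competing_bid_def cb_set by (rule Max.boundedI) auto

lemma ppc_eq: "ppc_revenue n c q p =
   competing_bid n (\<lambda>j. c j * q j) (auction_winner n (\<lambda>j. c j * q j)) / q (auction_winner n (\<lambda>j. c j * q j)) *
   p (auction_winner n (\<lambda>j. c j * q j))"
  by (simp add: ppc_revenue_def Let_def)

lemma hybrid_lower:
  assumes n: "0 < n" and v: "\<And>j. j < n \<Longrightarrow> 0 \<le> v j" and q: "\<And>j. j < n \<Longrightarrow> 0 < q j"
  defines "S \<equiv> (\<lambda>j. v j * q j)"
  defines "d \<equiv> auction_winner n S"
  assumes p: "0 \<le> p d"
  shows "competing_bid n S d / q d * min (p d) (q d) \<le> hybrid_revenue n (\<lambda>j. v j * p j) v q p"
proof -
  define R where "R = (\<lambda>j. max (v j * p j) (v j * q j))"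
  define w where "w = auction_winner n R"
  define CH where "CH = competing_bid n R w"
  define S2 where "S2 = competing_bid n S d"
  have hyb: "hybrid_revenue n (\<lambda>j. v j * p j) v q p = (if v w * p w > v w * q w then CH else CH / q w * p w)"
    by (simp add: hybrid_revenue_def Let_def R_def[symmetric] w_def[symmetric] CH_def[symmetric])
  have RS: "S j \<le> R j" for j by (simp add: S_def R_def)
  have d: "d < n" "\<And>i. i < n \<Longrightarrow> S i \<le> S d" "\<And>j. j < d \<Longrightarrow> S j < S d"
    using winner_props[OF n, where R=S] by (auto simp: d_def)
  have w: "w < n" "\<And>i. i < n \<Longrightarrow> R i \<le> R w" "\<And>j. j < w \<Longrightarrow> R j < R w"
    using winner_props[OF n, where R=R] by (auto simp: w_def)
  have S2: "0 \<le> S2" by (simp add: S2_def cb_nonneg)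
  have qd: "0 < q d" using q d by simp
  have Sd: "0 \<le> S d" using v q d by (simp add: S_def less_imp_le)
  have S2Sd: "S2 \<le> S d" unfolding S2_def by (rule cb_le) (use d Sd in auto)
  have mn: "min (p d) (q d) / q d \<le> 1" using qd by simp
  have bound1: "S2 / q d * min (p d) (q d) \<le> S2"
  proof -
    have "S2 / q d * min (p d) (q d) = S2 * (min (p d) (q d) / q d)" by simp
    also have "\<dots> \<le> S2 * 1" using S2 mn by (intro mult_left_mono) auto
    finally show ?thesis by simp
  qed
  show ?thesis
  proof (cases "w = d")
    case True
    have CH: "S2 \<le> CH" unfolding S2_def
      by (rule cb_le) (use RS True cb_ge[where R=R and w=w and n=n] cb_nonneg in \<open>auto simp: CH_def intro: order_trans\<close>)
    show ?thesis
    proof (cases "v w * p w > v w * q w")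
      case True
      thus ?thesis using hyb CH bound1 by (simp add: S2_def[symmetric])
    next
      case False
      have "S2 / q d * min (p d) (q d) \<le> S2 / q d * p d"
        using S2 qd by (intro mult_left_mono) auto
      also have "\<dots> \<le> CH / q d * p d"
        using CH qd p by (intro mult_right_mono divide_right_mono) auto
      finally show ?thesis using hyb False \<open>w = d\<close> by (simp add: S2_def[symmetric])
    qed
  next
    case False
    have CH: "R d \<le> CH" unfolding CH_def using d False by (intro cb_ge) auto
    have imp: "v w * p w > v w * q w"
    proof (rule ccontr)
      assume "\<not> v w * p w > v w * q w"
      hence Rw: "R w = S w" by (simp add: R_def S_def)
      have "S w \<le> S d" using d w by simp
      moreover have "S d \<le> R w" using RS[of d] w d by (meson order_trans)
      ultimately have eq: "S w = S d" "R d = R w" using Rw RS[of d] w(2)[OF d(1)] by auto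
      show False
      proof (cases "w < d")
        case True thus False using d(3)[OF True] eq by simp
      next
        case False
        hence "d < w" using \<open>w \<noteq> d\<close> by simp
        thus False using w(3) eq by fastforce
      qed
    qed
    have "S2 / q d * min (p d) (q d) \<le> CH" using bound1 S2Sd RS[of d] CH by linarith
    thus ?thesis using hyb imp by (simp add: S2_def)
  qed
qed

lemma cb_alt: "competing_bid n R j = Max ((\<lambda>i. if i < n \<and> i \<noteq> j then R i else 0) ` {..n})"
proof -
  have "insert 0 {R i |i. i < n \<and> i \<noteq> j} = (\<lambda>i. if i < n \<and> i \<noteq> j then R i else 0) ` {..n}"
  proof (intro equalityI subsetI)
    fix x assume "x \<in> insert 0 {R i |i. i < n \<and> i \<noteq> j}"
    thus "x \<in> (\<lambda>i. if i < n \<and> i \<noteq> j then R i else 0) ` {..n}"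
    proof
      assume "x = 0" thus ?thesis by (intro image_eqI[of _ _ n]) auto
    next
      assume "x \<in> {R i |i. i < n \<and> i \<noteq> j}"
      then obtain i where "i < n" "i \<noteq> j" "x = R i" by auto
      thus ?thesis by (intro image_eqI[of _ _ i]) auto
    qed
  qed auto
  thus ?thesis by (simp add: competing_bid_def)
qed

lemma comp_meas:
  assumes "\<And>j. sets (BM j) = sets borel"
  shows "(\<lambda>p. p k) \<in> borel_measurable (PiM I BM)"
proof (cases "k \<in> I")
  case True
  have "(\<lambda>p. p k) \<in> measurable (PiM I BM) (BM k)" using True by (rule measurable_component_singleton)
  thus ?thesis by (subst measurable_cong_sets[OF refl assms[of k, symmetric]])
next
  case False
  have "(\<lambda>_. undefined) \<in> borel_measurable (PiM I BM)" by simp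
  thus ?thesis by (rule measurable_cong[THEN iffD1, rotated]) (use False in \<open>auto simp: space_PiM PiE_def extensional_def\<close>)
qed

lemma hybrid_meas:
  assumes comp[measurable]: "\<And>k. (\<lambda>p. p k) \<in> borel_measurable N"
  shows "(\<lambda>p. hybrid_revenue n (\<lambda>j. v j * p j) v q p) \<in> borel_measurable N"
proof -
  define R where "R = (\<lambda>p j. max (v j * p j) (v j * q j))"
  have Rm[measurable]: "(\<lambda>p. R p j) \<in> borel_measurable N" for j unfolding R_def by measurable
  define F where "F = (\<lambda>j p. if v j * p j > v j * q j then competing_bid n (R p) j else competing_bid n (R p) j / q j * p j)"
  have wm: "(\<lambda>p. auction_winner n (R p)) \<in> measurable N (count_space UNIV)"
  proof -
    have Pm0: "{p \<in> space N. \<forall>k\<in>{..<n}. R p k \<le> R p i} \<in> sets N" for i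
      apply (rule sets.sets_Collect_finite_All)
       apply (rule borel_measurable_le[OF Rm Rm])
      apply simp
      done
    have Pm: "(\<lambda>p. i < n \<and> (\<forall>k<n. R p k \<le> R p i)) \<in> measurable N (count_space UNIV)" for i
    proof -
      have "{p \<in> space N. i < n \<and> (\<forall>k<n. R p k \<le> R p i)} \<in> sets N"
      proof (cases "i < n")
        case True
        have "{p \<in> space N. i < n \<and> (\<forall>k<n. R p k \<le> R p i)} = {p \<in> space N. \<forall>k\<in>{..<n}. R p k \<le> R p i}"
          using True by auto
        thus ?thesis using Pm0[of i] by simp
      qed simp
      thus ?thesis unfolding Measurable.pred_def .
    qed
    show ?thesis unfolding auction_winner_def
      by (rule measurable_Least, rule Pm)
  qed
  have Fm: "(\<lambda>p. F j p) \<in> borel_measurable N" for j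
    unfolding F_def cb_alt by measurable
  have "(\<lambda>p. F (auction_winner n (R p)) p) \<in> borel_measurable N"
    by (rule measurable_compose_countable'[OF Fm wm]) auto
  moreover have "hybrid_revenue n (\<lambda>j. v j * p j) v q p = F (auction_winner n (R p)) p" for p
    by (simp add: hybrid_revenue_def Let_def F_def R_def)
  ultimately show ?thesis by simp
qed

lemma beta_AE: "AE x in beta_measure a b. 0 \<le> x \<and> x \<le> 1"
  unfolding beta_measure_def
  by (subst AE_density) (auto intro!: AE_I2 simp: beta_density_def split: if_splits)

lemma beta_sets: "sets (beta_measure a b) = sets borel"
  by (simp add: beta_measure_def)

lemma hybrid_bound:
  assumes n: "0 < n" and q: "\<And>j. j < n \<Longrightarrow> 0 < q j" and p: "\<And>j. j < n \<Longrightarrow> 0 \<le> p j \<and> p j \<le> 1"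
  shows "\<bar>hybrid_revenue n (\<lambda>j. v j * p j) v q p\<bar> \<le>
    (\<Sum>j<n. \<bar>v j\<bar> * (1 + \<bar>q j\<bar>)) * (1 + (\<Sum>j<n. 1 / q j))"
proof -
  define K where "K = (\<Sum>j<n. \<bar>v j\<bar> * (1 + \<bar>q j\<bar>))"
  define T where "T = (\<Sum>j<n. 1 / q j)"
  define R where "R = (\<lambda>j. max (v j * p j) (v j * q j))"
  define w where "w = auction_winner n R"
  define CH where "CH = competing_bid n R w"
  have hyb: "hybrid_revenue n (\<lambda>j. v j * p j) v q p = (if v w * p w > v w * q w then CH else CH / q w * p w)"
    by (simp add: hybrid_revenue_def Let_def R_def[symmetric] w_def[symmetric] CH_def[symmetric])
  have K0: "0 \<le> K" unfolding K_def by (intro sum_nonneg) auto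
  have Rj: "R j \<le> K" if "j < n" for j
  proof -
    have "\<bar>v j * p j\<bar> \<le> \<bar>v j\<bar> * (1 + \<bar>q j\<bar>)" using p[OF that]
      by (simp add: abs_mult) (intro mult_left_mono, auto)
    moreover have "\<bar>v j * q j\<bar> \<le> \<bar>v j\<bar> * (1 + \<bar>q j\<bar>)"
      by (simp add: abs_mult mult_left_mono)
    moreover have "\<bar>v j\<bar> * (1 + \<bar>q j\<bar>) \<le> K" unfolding K_def
      by (rule member_le_sum[where f="\<lambda>j. \<bar>v j\<bar> * (1 + \<bar>q j\<bar>)"]) (use that in auto)
    ultimately show ?thesis unfolding R_def
      by (metis abs_ge_self max.boundedI order_trans)
  qed
  have CH: "0 \<le> CH" "CH \<le> K" unfolding CH_def
    by (auto intro!: cb_nonneg cb_le Rj K0)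
  have w: "w < n" using winner_props(1)[OF n] by (simp add: w_def)
  have T0: "0 \<le> T" unfolding T_def using q by (intro sum_nonneg) (auto simp: less_imp_le)
  have qT: "1 / q w \<le> T" unfolding T_def
    by (rule member_le_sum[where f="\<lambda>j. 1 / q j"]) (use w q in \<open>auto simp: less_imp_le\<close>)
  have "\<bar>CH / q w * p w\<bar> \<le> K * T"
  proof -
    have "\<bar>CH / q w * p w\<bar> = CH * (1 / q w) * p w" using CH q[OF w] p[OF w] by (simp add: abs_mult)
    also have "\<dots> \<le> K * T * 1" using CH q[OF w] p[OF w] qT K0 T0
      by (intro mult_mono) (auto simp: less_imp_le)
    finally show ?thesis by simp
  qed
  moreover have "\<bar>CH\<bar> \<le> K * (1 + T)"
  proof -
    have "0 \<le> K * T" using K0 T0 by simp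
    thus ?thesis using CH unfolding distrib_left mult_1_right abs_of_nonneg[OF CH(1)] by linarith
  qed
  moreover have "K * T \<le> K * (1 + T)" using K0 by (simp add: algebra_simps)
  ultimately show ?thesis using hyb by (auto simp: K_def[symmetric] T_def[symmetric])
qed

theorem theorem2:
  fixes n :: nat and v \<alpha> \<beta> :: "nat \<Rightarrow> real" and \<gamma> :: real
  assumes "\<And>j. j < n \<Longrightarrow> 0 \<le> v j"
    and "\<And>j. j < n \<Longrightarrow> 1 \<le> \<alpha> j"
    and "\<And>j. j < n \<Longrightarrow> 1 \<le> \<beta> j"
    and "0 \<le> \<gamma>" and "\<gamma> < 1"
  defines "q \<equiv> (\<lambda>j. gittins_index \<gamma> (\<alpha> j) (\<beta> j))"
    and "M \<equiv> PiM {..<n} (\<lambda>j. beta_measure (\<alpha> j) (\<beta> j))"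
  shows "(LINT p|M. hybrid_revenue n (\<lambda>j. v j * p j) v q p)
           \<ge> (1 - exp (-1)) * (LINT p|M. ppc_revenue n v q p)"
proof (cases "n = 0")
  case True
  have "hybrid_revenue n (\<lambda>j. v j * p j) v q p = 0" "ppc_revenue n v q p = 0" for p
    using True by (simp_all add: hybrid_revenue_def ppc_revenue_def competing_bid_def cb_set Let_def)
  thus ?thesis by simp
next
  case False
  hence n: "0 < n" by simp
  note v = assms(1) and al = assms(2) and be = assms(3) and g = assms(4,5)
  define BM where "BM = (\<lambda>j. beta_measure (\<alpha> j) (\<beta> j))"
  have Mdef: "M = PiM {..<n} BM" by (simp add: M_def BM_def)
  have probs: "\<And>j. j \<in> {..<n} \<Longrightarrow> prob_space (BM j)"
    unfolding BM_def using al be by (intro beta_prob) (auto intro: less_le_trans[OF zero_less_one])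
  interpret P: prob_space M unfolding Mdef by (rule prob_space_PiM[OF probs])
  have comp[measurable]: "\<And>k. (\<lambda>p. p k) \<in> borel_measurable M"
    unfolding Mdef by (rule comp_meas) (simp add: BM_def beta_sets)
  have mu_q: "\<alpha> j / (\<alpha> j + \<beta> j) \<le> q j" if "j < n" for j
    using gittins_ge_mean[OF g, of "\<alpha> j" "\<beta> j"] al[OF that] be[OF that]
    by (simp add: q_def beta_mean_def)
  have mu_pos: "0 < \<alpha> j / (\<alpha> j + \<beta> j)" if "j < n" for j
    using al[OF that] be[OF that] by simp
  have qpos: "0 < q j" if "j < n" for j using mu_q[OF that] mu_pos[OF that] by linarith
  define S where "S = (\<lambda>j. v j * q j)"
  define d where "d = auction_winner n S"
  define S2 where "S2 = competing_bid n S d"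
  define \<mu> where "\<mu> = \<alpha> d / (\<alpha> d + \<beta> d)"
  have d: "d < n" using winner_props(1)[OF n] by (simp add: d_def)
  have S2: "0 \<le> S2" by (simp add: S2_def cb_nonneg)
  have qd: "0 < q d" using qpos[OF d] .
  have al_d: "1 \<le> \<alpha> d" and be_d: "1 \<le> \<beta> d" using al[OF d] be[OF d] by auto
  have dist: "distr M (BM d) (\<lambda>p. p d) = BM d"
    unfolding Mdef by (rule distr_PiM_component[OF probs]) (use d in auto)
  have cm: "(\<lambda>p. p d) \<in> measurable M (BM d)"
    unfolding Mdef by (rule measurable_component_singleton) (use d in auto)
  have transfer_int: "integrable M (\<lambda>p. h (p d))" "(LINT p|M. h (p d)) = (LINT x|BM d. h x)"
    if hi: "integrable (BM d) h" and hm: "h \<in> borel_measurable borel" for h :: "real \<Rightarrow> real"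
  proof -
    have hm': "h \<in> borel_measurable (BM d)"
    proof -
      have bs: "sets (BM d) = sets borel" by (simp add: BM_def beta_sets)
      show ?thesis by (simp only: measurable_cong_sets[OF bs refl] hm)
    qed
    show "integrable M (\<lambda>p. h (p d))"
      using hi integrable_distr_eq[OF cm hm'] dist by simp
    show "(LINT p|M. h (p d)) = (LINT x|BM d. h x)"
      using integral_distr[OF cm hm'] dist by simp
  qed
  have X: "has_bochner_integral (BM d) (\<lambda>x. x) \<mu>"
    using beta_mean_int[of "\<alpha> d" "\<beta> d"] al_d be_d by (simp add: BM_def \<mu>_def)
  have iX: "integrable (BM d) (\<lambda>x. x)" and EX: "(LINT x|BM d. x) = \<mu>"
    using X by (auto simp: has_bochner_integral_iff)
  have iMin: "integrable (BM d) (\<lambda>x. min x (q d))"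
    and EMin: "(1 - exp (-1)) * \<mu> \<le> (LINT x|BM d. min x (q d))"
    using beta_min_bound[OF al_d be_d mu_q[OF d]] by (simp_all add: BM_def \<mu>_def)
  have ppc: "ppc_revenue n v q p = S2 / q d * p d" for p
    by (simp add: ppc_eq S_def[symmetric] d_def[symmetric] S2_def[symmetric])
  have RHS: "(LINT p|M. ppc_revenue n v q p) = S2 / q d * \<mu>"
    using transfer_int(2)[OF iX] EX by (simp add: ppc)
  have iMinM: "integrable M (\<lambda>p. S2 / q d * min (p d) (q d))"
    using transfer_int(1)[OF iMin] by simp
  have EMinM: "(LINT p|M. S2 / q d * min (p d) (q d)) = S2 / q d * (LINT x|BM d. min x (q d))"
    using transfer_int(2)[OF iMin] by simp
  have AEp: "AE p in M. \<forall>j\<in>{..<n}. 0 \<le> p j \<and> p j \<le> 1"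
  proof (rule AE_finite_allI)
    fix j assume j: "j \<in> {..<n}"
    show "AE p in M. 0 \<le> p j \<and> p j \<le> 1"
      unfolding Mdef
      apply (rule AE_PiM_component[where M=BM])
        apply (erule probs)
       apply (rule j)
      apply (unfold BM_def, rule beta_AE)
      done
  qed simp
  have iH: "integrable M (\<lambda>p. hybrid_revenue n (\<lambda>j. v j * p j) v q p)"
  proof (rule P.integrable_const_bound)
    show "AE p in M. norm (hybrid_revenue n (\<lambda>j. v j * p j) v q p) \<le>
        (\<Sum>j<n. \<bar>v j\<bar> * (1 + \<bar>q j\<bar>)) * (1 + (\<Sum>j<n. 1 / q j))"
      using AEp by eventually_elim (auto intro!: hybrid_bound[OF n qpos])
    show "(\<lambda>p. hybrid_revenue n (\<lambda>j. v j * p j) v q p) \<in> borel_measurable M"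
      by (rule hybrid_meas[OF comp])
  qed
  have Hge: "(LINT p|M. S2 / q d * min (p d) (q d)) \<le> (LINT p|M. hybrid_revenue n (\<lambda>j. v j * p j) v q p)"
  proof (rule integral_mono_AE[OF iMinM iH])
    show "AE p in M. S2 / q d * min (p d) (q d) \<le> hybrid_revenue n (\<lambda>j. v j * p j) v q p"
      using AEp
    proof eventually_elim
      case (elim p)
      hence "0 \<le> p d" using d by auto
      thus ?case using hybrid_lower[OF n v qpos, where p=p] by (simp add: S2_def S_def d_def)
    qed
  qed
  have "(1 - exp (-1)) * (LINT p|M. ppc_revenue n v q p) = S2 / q d * ((1 - exp (-1)) * \<mu>)"
    by (simp add: RHS)
  also have "\<dots> \<le> S2 / q d * (LINT x|BM d. min x (q d))"
    using EMin S2 qd by (intro mult_left_mono) auto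
  also have "\<dots> = (LINT p|M. S2 / q d * min (p d) (q d))" by (rule EMinM[symmetric])
  also have "\<dots> \<le> (LINT p|M. hybrid_revenue n (\<lambda>j. v j * p j) v q p)" by (rule Hge)
  finally show ?thesis .
qed

end
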